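(* Let $I=\langle N,M,V\rangle$ be an ordered instance of chores and let $B\subseteq M$ be a bundle with $v_i(B)\ge\mu_i$ for some agent $i\in N$. If every agent $i'\in N\setminus\{i\}$ has an MMS partition containing a bundle $B_{i'}$ with $B\succeq B_{i'}$, then allocating $B$ to $i$ is a valid reduction.
   Context: An instance of chores $I=\langle N,M,V\rangle$ has agents $N=\{1,\dots,n\}$, chores $M=\{1,\dots,m\}$ and additive valuations $v_i$ with $v_i(\emptyset)=0$, $v_i(S)=\sum_{g\in S}v_i(\{g\})$ and $v_{ij}:=v_i(\{j\})\le 0$. It is ordered if $v_{ij}\le v_{i(j+1)}$ for all $i$ and $1\le j<m$. An allocation ($n$-partition) is an ordered $n$-tuple of pairwise disjoint, possibly empty subsets of $M$ with union $M$. The maximin share of $i$ in $I$ is $\mu_i=\mu_i^I=\max_A\min_j v_i(A_j)$ over all allocations; an MMS partition of $i$ is an allocation $A$ with $v_i(A_j)\ge\mu_i$ for all $j$. For $B,B'\subseteq M$, $B\succeq B'$ means there is an injective map $f:B'\to B$ with $f(j)\le j$ for all $j\in B'$. Removing agents $N'\subseteq N$ and items $M'\subseteq M$ is a valid reduction if the items of $M'$ can be allocated to the agents of $N'$ so that each $i'\in N'$ receives a bundle $B_{i'}$ with $v_{i'}(B_{i'})\ge\mu_{i'}^I$, and every $i\in N\setminus N'$ satisfies $\mu_i^{I'}\ge\mu_i^I$, where $I'=\langle N\setminus N', M\setminus M', V\rangle$ (valuations restricted, maximin share computed with $|N\setminus N'|$ bundles). "Allocating $B$ to $i$ is a valid reduction"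 means this holds with $N'=\{i\}$, $M'=B$. *)

theory Defs
  imports Complex_Main
begin

(* Agents are 1..n, chores are 1..m; v i j is the (nonpositive) value of chore j for agent i. *)

definition bval :: "(nat \<Rightarrow> nat \<Rightarrow> real) \<Rightarrow> nat \<Rightarrow> nat set \<Rightarrow> real" where
  "bval v i S = (\<Sum>g\<in>S. v i g)"

(* A is a k-partition (allocation) of the item set S, bundles indexed by 1..k, possibly empty *)
definition is_alloc :: "nat \<Rightarrow> nat set \<Rightarrow> (nat \<Rightarrow> nat set) \<Rightarrow> bool" where
  "is_alloc k S A \<longleftrightarrow>
     (\<forall>j\<in>{1..k}. \<forall>j'\<in>{1..k}. j \<noteq> j' \<longrightarrow> A j \<inter> A j' = {}) \<and>
     (\<Union>j\<in>{1..k}. A j) = S"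

definition mms :: "(nat \<Rightarrow> nat \<Rightarrow> real) \<Rightarrow> nat \<Rightarrow> nat \<Rightarrow> nat set \<Rightarrow> real" where
  "mms v i k S = Max {Min ((\<lambda>j. bval v i (A j)) ` {1..k}) | A. is_alloc k S A}"

definition mms_partition :: "(nat \<Rightarrow> nat \<Rightarrow> real) \<Rightarrow> nat \<Rightarrow> nat \<Rightarrow> nat set \<Rightarrow> (nat \<Rightarrow> nat set) \<Rightarrow> bool" where
  "mms_partition v i k S A \<longleftrightarrow> is_alloc k S A \<and> (\<forall>j\<in>{1..k}. bval v i (A j) \<ge> mms v i k S)"

definition dominates :: "nat set \<Rightarrow> nat set \<Rightarrow> bool" where
  "dominates B B' \<longleftrightarrow> (\<exists>f. inj_on f B' \<and> f ` B' \<subseteq> B \<and> (\<forall>j\<in>B'. f j \<le> j))"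

definition ordered_instance :: "nat \<Rightarrow> nat \<Rightarrow> (nat \<Rightarrow> nat \<Rightarrow> real) \<Rightarrow> bool" where
  "ordered_instance n m v \<longleftrightarrow>
     (\<forall>i\<in>{1..n}. \<forall>j\<in>{1..m}. v i j \<le> 0) \<and>
     (\<forall>i\<in>{1..n}. \<forall>j. 1 \<le> j \<and> j < m \<longrightarrow> v i j \<le> v i (j + 1))"

definition valid_single_reduction :: "nat \<Rightarrow> nat \<Rightarrow> (nat \<Rightarrow> nat \<Rightarrow> real) \<Rightarrow> nat \<Rightarrow> nat set \<Rightarrow> bool" where
  "valid_single_reduction n m v i B \<longleftrightarrow>
     bval v i B \<ge> mms v i n {1..m} \<and>
     (\<forall>i'\<in>{1..n} - {i}. mms v i' (n - 1) ({1..m} - B) \<ge> mms v i' n {1..m})"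

end

theory Submission
  imports Defs "HOL-Library.FuncSet"
begin

lemma dom_diff:
  "finite S \<Longrightarrow> dominates B S \<Longrightarrow> dominates (B - S) (S - B)"
proof (induction "card (S \<inter> B)" arbitrary: S B)
  case 0
  then have "S \<inter> B = {}" by simp
  then have "B - S = B" "S - B = S" by auto
  with 0 show ?case by simp
next
  case (Suc c)
  then have "S \<inter> B \<noteq> {}" by auto
  then obtain b where b: "b \<in> S" "b \<in> B" by auto
  from Suc.prems(2) obtain f where f: "inj_on f S" "f ` S \<subseteq> B" "\<forall>j\<in>S. f j \<le> j"
    unfolding dominates_def by blast
  define f' where "f' = (\<lambda>x. if f x = b then f b else f x)"
  have fb: "\<And>x. x \<in> S - {b} \<Longrightarrow> f x = b \<Longrightarrow> f b \<noteq> b"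
    using f(1) b by (metis DiffE inj_on_eq_iff singletonI)
  have "dominates (B - {b}) (S - {b})"
    unfolding dominates_def
  proof (intro exI[of _ f'] conjI)
    show "inj_on f' (S - {b})"
    proof (rule inj_onI)
      fix x y assume xy: "x \<in> S - {b}" "y \<in> S - {b}" "f' x = f' y"
      show "x = y"
      proof (cases "f x = b"; cases "f y = b")
        assume "f x = b" "f y = b" then show ?thesis using f(1) xy by (auto dest: inj_onD)
      next
        assume "f x = b" "f y \<noteq> b" then have "f b = f y" using xy by (simp add: f'_def)
        then have "b = y" using f(1) b xy by (auto dest: inj_onD)
        then show ?thesis using xy by auto
      next
        assume "f x \<noteq> b" "f y = b" then have "f b = f x" using xy by (simp add: f'_def)
        then have "b = x" using f(1) b xy by (auto dest: inj_onD)
        then show ?thesis using xy by auto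
      next
        assume "f x \<noteq> b" "f y \<noteq> b" then show ?thesis using f(1) xy by (auto simp: f'_def dest: inj_onD)
      qed
    qed
    show "f' ` (S - {b}) \<subseteq> B - {b}"
      using f b fb by (auto simp: f'_def)
    show "\<forall>j\<in>S - {b}. f' j \<le> j"
      using f b by (auto simp: f'_def) (metis le_trans)
  qed
  moreover have "card ((S - {b}) \<inter> (B - {b})) = c"
  proof -
    have "(S - {b}) \<inter> (B - {b}) = (S \<inter> B) - {b}" by auto
    then show ?thesis using Suc.hyps(2) b Suc.prems(1) by simp
  qed
  ultimately have "dominates ((B - {b}) - (S - {b})) ((S - {b}) - (B - {b}))"
    using Suc.hyps(1) Suc.prems(1) by simp
  moreover have "(B - {b}) - (S - {b}) = B - S" "(S - {b}) - (B - {b}) = S - B" using b by auto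
  ultimately show ?case by simp
qed

lemma mms_set_finite:
  assumes "finite S"
  shows "finite {Min ((\<lambda>j. bval v i (A j)) ` {1..k}) | A. is_alloc k S A}"
proof -
  have "{Min ((\<lambda>j. bval v i (A j)) ` {1..k}) | A. is_alloc k S A}
        \<subseteq> (\<lambda>h. Min (h ` {1..k})) ` ({1..k} \<rightarrow>\<^sub>E (bval v i ` Pow S))"
  proof
    fix x assume "x \<in> {Min ((\<lambda>j. bval v i (A j)) ` {1..k}) | A. is_alloc k S A}"
    then obtain A where A: "is_alloc k S A" "x = Min ((\<lambda>j. bval v i (A j)) ` {1..k})" by blast
    define h where "h = restrict (\<lambda>j. bval v i (A j)) {1..k}"
    have "h \<in> {1..k} \<rightarrow>\<^sub>E (bval v i ` Pow S)"
      using A(1) unfolding h_def is_alloc_def by auto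
    moreover have "h ` {1..k} = (\<lambda>j. bval v i (A j)) ` {1..k}" unfolding h_def by auto
    ultimately show "x \<in> (\<lambda>h. Min (h ` {1..k})) ` ({1..k} \<rightarrow>\<^sub>E (bval v i ` Pow S))"
      using A(2) by (metis (no_types, lifting) image_eqI)
  qed
  moreover have "finite ({1..k} \<rightarrow>\<^sub>E (bval v i ` Pow S))"
    using assms by (intro finite_PiE) auto
  ultimately show ?thesis by (meson finite_imageI finite_subset)
qed

lemma mms_ge:
  assumes "is_alloc k S C" "k \<ge> 1" "finite S" "\<forall>l\<in>{1..k}. bval v i (C l) \<ge> mu"
  shows "mms v i k S \<ge> mu"
proof -
  let ?x = "Min ((\<lambda>j. bval v i (C j)) ` {1..k})"
  have "?x \<ge> mu" using assms(2,4) by (subst Min_ge_iff) auto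
  moreover have "?x \<le> mms v i k S" unfolding mms_def
    by (rule Max_ge[OF mms_set_finite[OF assms(3)]]) (use assms(1) in blast)
  ultimately show ?thesis by simp
qed

lemma sum_sub_nonpos:
  fixes w :: "nat \<Rightarrow> real"
  assumes "finite T" "S \<subseteq> T" "\<forall>x\<in>T. w x \<le> 0"
  shows "sum w T \<le> sum w S"
proof -
  have "sum w T = sum w S + sum w (T - S)" using assms by (metis add.commute sum.subset_diff)
  moreover have "sum w (T - S) \<le> 0" using assms(3) by (intro sum_nonpos) auto
  ultimately show ?thesis by simp
qed

lemma agent_step:
  fixes v :: "nat \<Rightarrow> nat \<Rightarrow> real"
  assumes mono: "\<And>a b. a \<in> {1..m} \<Longrightarrow> b \<in> {1..m} \<Longrightarrow> a \<le> b \<Longrightarrow> v i' a \<le> v i' b"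
    and nonpos: "\<forall>a\<in>{1..m}. v i' a \<le> 0"
    and n2: "n \<ge> 2" and A: "is_alloc n {1..m} A" and j: "j \<in> {1..n}"
    and Aval: "\<forall>k\<in>{1..n}. bval v i' (A k) \<ge> mu"
    and B: "B \<subseteq> {1..m}" and dom: "dominates B (A j)"
  shows "mms v i' (n - 1) ({1..m} - B) \<ge> mu"
proof -
  let ?M = "{1..m::nat}"
  have Asub: "\<And>k. k \<in> {1..n} \<Longrightarrow> A k \<subseteq> ?M" using A unfolding is_alloc_def by blast
  have Adisj: "\<And>k k'. k \<in> {1..n} \<Longrightarrow> k' \<in> {1..n} \<Longrightarrow> k \<noteq> k' \<Longrightarrow> A k \<inter> A k' = {}"
    using A unfolding is_alloc_def by blast
  have Acov: "\<And>x. x \<in> ?M \<Longrightarrow> \<exists>k\<in>{1..n}. x \<in> A k" using A unfolding is_alloc_def by blast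
  have finAj: "finite (A j)" using Asub[OF j] finite_subset by blast
  obtain g where g: "inj_on g (A j - B)" "g ` (A j - B) \<subseteq> B - A j" "\<forall>x\<in>A j - B. g x \<le> x"
    using dom_diff[OF finAj dom] unfolding dominates_def by blast
  define \<sigma> where "\<sigma> = (\<lambda>k::nat. if k < j then k else Suc k)"
  have \<sigma>in: "\<And>k. k \<in> {1..n-1} \<Longrightarrow> \<sigma> k \<in> {1..n} \<and> \<sigma> k \<noteq> j" using j unfolding \<sigma>_def by auto
  have \<sigma>inj: "\<And>k k'. \<sigma> k = \<sigma> k' \<Longrightarrow> k = k'" unfolding \<sigma>_def by (auto split: if_splits)
  have \<sigma>surj: "\<And>k1. k1 \<in> {1..n} \<Longrightarrow> k1 \<noteq> j \<Longrightarrow> \<exists>k\<in>{1..n-1}. \<sigma> k = k1"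
  proof -
    fix k1 assume k1: "k1 \<in> {1..n}" "k1 \<noteq> j"
    show "\<exists>k\<in>{1..n-1}. \<sigma> k = k1"
    proof (cases "k1 < j")
      case True then show ?thesis using k1 j by (intro bexI[of _ k1]) (auto simp: \<sigma>_def)
    next
      case False then show ?thesis using k1 j by (intro bexI[of _ "k1 - 1"]) (auto simp: \<sigma>_def)
    qed
  qed
  define X where "X = (\<lambda>k. {x \<in> A j - B. g x \<in> A (\<sigma> k)})"
  define C where "C = (\<lambda>k. (A (\<sigma> k) - B) \<union> X k)"
  have XAj: "\<And>k. X k \<subseteq> A j - B" unfolding X_def by auto
  have alloc: "is_alloc (n - 1) (?M - B) C"
    unfolding is_alloc_def
  proof (intro conjI ballI impI)
    fix k k' assume k: "k \<in> {1..n-1}" "k' \<in> {1..n-1}" "k \<noteq> k'"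
    have d1: "A (\<sigma> k) \<inter> A (\<sigma> k') = {}" using Adisj \<sigma>in \<sigma>inj k by metis
    have d2: "A (\<sigma> k) \<inter> A j = {}" "A (\<sigma> k') \<inter> A j = {}" using Adisj \<sigma>in k j by metis+
    show "C k \<inter> C k' = {}"
      using d1 d2 XAj unfolding C_def X_def by blast
  next
    show "(\<Union>k\<in>{1..n-1}. C k) = ?M - B"
    proof
      show "(\<Union>k\<in>{1..n-1}. C k) \<subseteq> ?M - B"
        using Asub \<sigma>in XAj Asub[OF j] unfolding C_def by blast
    next
      show "?M - B \<subseteq> (\<Union>k\<in>{1..n-1}. C k)"
      proof
        fix x assume x: "x \<in> ?M - B"
        then obtain k0 where k0: "k0 \<in> {1..n}" "x \<in> A k0" using Acov by blast
        show "x \<in> (\<Union>k\<in>{1..n-1}. C k)"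
        proof (cases "k0 = j")
          case True
          then have xX: "x \<in> A j - B" using x k0 by auto
          then have "g x \<in> B - A j" using g(2) by blast
          then have "g x \<in> ?M" "g x \<notin> A j" using B by auto
          then obtain k1 where k1: "k1 \<in> {1..n}" "g x \<in> A k1" "k1 \<noteq> j" using Acov by blast
          then obtain k where k: "k \<in> {1..n-1}" "\<sigma> k = k1" using \<sigma>surj by blast
          then have "x \<in> X k" using xX k1 unfolding X_def by auto
          then show ?thesis using k unfolding C_def by blast
        next
          case False
          then obtain k where k: "k \<in> {1..n-1}" "\<sigma> k = k0" using \<sigma>surj k0 by blast
          then show ?thesis using x k0 unfolding C_def by blast
        qed
      qed
    qed
  qed
  have vals: "\<forall>k\<in>{1..n-1}. bval v i' (C k) \<ge> mu"
  proof
    fix k assume k: "k \<in> {1..n-1}"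
    let ?Ak = "A (\<sigma> k)"
    have Aksub: "?Ak \<subseteq> ?M" using Asub \<sigma>in k by blast
    have finAk: "finite ?Ak" using Aksub finite_subset by blast
    have finX: "finite (X k)" using XAj finAj finite_subset by blast
    have disjX: "(?Ak - B) \<inter> X k = {}"
      using XAj Adisj \<sigma>in k j by blast
    have eqC: "bval v i' (C k) = sum (v i') (?Ak - B) + sum (v i') (X k)"
      unfolding bval_def C_def using finAk finX disjX by (simp add: sum.union_disjoint)
    have eqA: "bval v i' ?Ak = sum (v i') (?Ak - B) + sum (v i') (?Ak \<inter> B)"
      unfolding bval_def using finAk
      by (metis Diff_Diff_Int Diff_subset Int_commute add.commute inf.absorb_iff2 inf_le1 sum.subset_diff)
    have gX: "g ` X k \<subseteq> ?Ak \<inter> B" using g(2) unfolding X_def by blast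
    have s1: "sum (v i') (?Ak \<inter> B) \<le> sum (v i') (g ` X k)"
      using sum_sub_nonpos[OF _ gX] finAk nonpos Aksub by auto
    have injX: "inj_on g (X k)" using g(1) XAj inj_on_subset by blast
    have s2: "sum (v i') (g ` X k) = sum (\<lambda>x. v i' (g x)) (X k)"
      using sum.reindex[OF injX] by simp
    have s3: "sum (\<lambda>x. v i' (g x)) (X k) \<le> sum (v i') (X k)"
    proof (rule sum_mono)
      fix x assume "x \<in> X k"
      then have xx: "x \<in> A j - B" using XAj by blast
      then have "g x \<in> B" "g x \<le> x" "x \<in> ?M" using g Asub[OF j] by auto
      then show "v i' (g x) \<le> v i' x" using mono B by blast
    qed
    have "mu \<le> bval v i' ?Ak" using Aval \<sigma>in k by blast
    then show "mu \<le> bval v i' (C k)" using eqC eqA s1 s2 s3 by linarith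
  qed
  show ?thesis
    using mms_ge[OF alloc _ _ vals] n2 by simp
qed

lemma ordered_mono:
  assumes "ordered_instance n m v" "i \<in> {1..n}"
  shows "a \<in> {1..m} \<Longrightarrow> b \<in> {1..m} \<Longrightarrow> a \<le> b \<Longrightarrow> v i a \<le> v i b"
proof (induction b)
  case 0 then show ?case by simp
next
  case (Suc b)
  show ?case
  proof (cases "a = Suc b")
    case True then show ?thesis by simp
  next
    case False
    then have "a \<le> b" "b \<in> {1..m}" using Suc.prems by auto
    then have "v i a \<le> v i b" using Suc by simp
    moreover have "v i b \<le> v i (b + 1)" using assms Suc.prems \<open>b \<in> {1..m}\<close>
      unfolding ordered_instance_def by auto
    ultimately show ?thesis by simp
  qed
qed

theorem lemma16:
  fixes n m :: nat and v :: "nat \<Rightarrow> nat \<Rightarrow> real" and i :: nat and B :: "nat set"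
  assumes "ordered_instance n m v"
    and "i \<in> {1..n}"
    and "B \<subseteq> {1..m}"
    and "bval v i B \<ge> mms v i n {1..m}"
    and "\<forall>i'\<in>{1..n} - {i}. \<exists>A. mms_partition v i' n {1..m} A \<and>
            (\<exists>j\<in>{1..n}. dominates B (A j))"
  shows "valid_single_reduction n m v i B"
  unfolding valid_single_reduction_def
proof (intro conjI ballI)
  show "bval v i B \<ge> mms v i n {1..m}" by fact
next
  fix i' assume i': "i' \<in> {1..n} - {i}"
  then have n2: "n \<ge> 2" using assms(2) by auto
  from assms(5) i' obtain A j where A: "mms_partition v i' n {1..m} A" "j \<in> {1..n}" "dominates B (A j)"
    by blast
  have i'n: "i' \<in> {1..n}" using i' by blast
  show "mms v i' (n - 1) ({1..m} - B) \<ge> mms v i' n {1..m}"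
  proof (rule agent_step[where j=j and A=A])
    show "\<And>a b. a \<in> {1..m} \<Longrightarrow> b \<in> {1..m} \<Longrightarrow> a \<le> b \<Longrightarrow> v i' a \<le> v i' b"
      using ordered_mono[OF assms(1) i'n] by blast
    show "\<forall>a\<in>{1..m}. v i' a \<le> 0" using assms(1) i'n unfolding ordered_instance_def by blast
    show "is_alloc n {1..m} A" using A(1) unfolding mms_partition_def by blast
    show "\<forall>k\<in>{1..n}. mms v i' n {1..m} \<le> bval v i' (A k)" using A(1) unfolding mms_partition_def by blast
    show "2 \<le> n" by (rule n2)
    show "j \<in> {1..n}" by (rule A(2))
    show "B \<subseteq> {1..m}" by (rule assms(3))
    show "dominates B (A j)" by (rule A(3))
  qed
qed

end
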